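(* For every $\epsilon>0$ there exist an online convex optimization problem (convex losses $f_1,f_2,\dots$ with uniformly bounded gradients on a convex feasible set $\mathcal{F}$ of bounded $\ell_\infty$-diameter) and parameters $\beta_1,\beta_2\in[0,1)$ with $\beta_1^2/\sqrt{\beta_2}<1$ and step sizes $\alpha_t=\alpha/\sqrt{t}$ such that Adam with the $\epsilon$-modified update has non-vanishing average regret, i.e. $R_T/T\not\to0$ as $T\to\infty$.
   Context: Regret: $R_T=\sum_{t=1}^T f_t(x_t)-\min_{x\in\mathcal{F}}\sum_{t=1}^T f_t(x)$. $\Pi_{\mathcal{F},A}(y)=\arg\min_{x\in\mathcal{F}}\|A^{1/2}(x-y)\|$. Adam with the $\epsilon$-modified update: $x_1\in\mathcal{F}$, $m_0=v_0=0$; for each $t$: $g_t=\nabla f_t(x_t)$, $m_t=\beta_1 m_{t-1}+(1-\beta_1)g_t$, $v_t=\beta_2 v_{t-1}+(1-\beta_2)g_t^2$, $V_t=\mathrm{diag}(v_t)$, $\hat x_{t+1}=x_t-\alpha_t m_t/\sqrt{V_t+\epsilon I}$, $x_{t+1}=\Pi_{\mathcal{F},\sqrt{V_t}}(\hat x_{t+1})$ (coordinatewise operations). The parameter conditions $\beta_1,\beta_2\in[0,1)$, $\beta_1^2/\sqrt{\beta_2}<1$, $\alpha_t=\alpha/\sqrt t$ are those of Kingma and Ba's convergence analysis of Adam. *)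

theory Defs
  imports "HOL-Analysis.Analysis"
begin

text \<open>Vectors of R^d are represented as functions nat => real vanishing at coordinates >= d.\<close>

definition Rd :: "nat \<Rightarrow> (nat \<Rightarrow> real) set" where
  "Rd d = {x. \<forall>i\<ge>d. x i = 0}"

definition linf_dist :: "nat \<Rightarrow> (nat \<Rightarrow> real) \<Rightarrow> (nat \<Rightarrow> real) \<Rightarrow> real" where
  "linf_dist d x y = Max (insert 0 ((\<lambda>i. \<bar>x i - y i\<bar>) ` {..<d}))"

definition convex_set_Rd :: "nat \<Rightarrow> (nat \<Rightarrow> real) set \<Rightarrow> bool" where
  "convex_set_Rd d F \<longleftrightarrow> F \<subseteq> Rd d \<and>
     (\<forall>x\<in>F. \<forall>y\<in>F. \<forall>u::real. 0 \<le> u \<and> u \<le> 1 \<longrightarrow> (\<lambda>i. u * x i + (1 - u) * y i) \<in> F)"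

definition convex_fun_on :: "(nat \<Rightarrow> real) set \<Rightarrow> ((nat \<Rightarrow> real) \<Rightarrow> real) \<Rightarrow> bool" where
  "convex_fun_on F f \<longleftrightarrow>
     (\<forall>x\<in>F. \<forall>y\<in>F. \<forall>u::real. 0 \<le> u \<and> u \<le> 1 \<longrightarrow>
        f (\<lambda>i. u * x i + (1 - u) * y i) \<le> u * f x + (1 - u) * f y)"

text \<open>Frechet gradient of f : R^d -> R at x (all norms on R^d are equivalent; we use l_inf).\<close>
definition has_gradient :: "nat \<Rightarrow> ((nat \<Rightarrow> real) \<Rightarrow> real) \<Rightarrow> (nat \<Rightarrow> real) \<Rightarrow> (nat \<Rightarrow> real) \<Rightarrow> bool" where
  "has_gradient d f g x \<longleftrightarrow> g \<in> Rd d \<and>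
     (\<forall>e>0. \<exists>\<delta>>0. \<forall>y\<in>Rd d. linf_dist d y x < \<delta> \<longrightarrow>
        \<bar>f y - f x - (\<Sum>i<d. g i * (y i - x i))\<bar> \<le> e * linf_dist d y x)"

definition oco_problem :: "nat \<Rightarrow> (nat \<Rightarrow> real) set \<Rightarrow> (nat \<Rightarrow> (nat \<Rightarrow> real) \<Rightarrow> real)
    \<Rightarrow> (nat \<Rightarrow> (nat \<Rightarrow> real) \<Rightarrow> (nat \<Rightarrow> real)) \<Rightarrow> bool" where
  "oco_problem d F f grad \<longleftrightarrow>
     convex_set_Rd d F \<and>
     (\<exists>D. \<forall>x\<in>F. \<forall>y\<in>F. \<forall>i. \<bar>x i - y i\<bar> \<le> D) \<and>
     (\<forall>t\<ge>1. convex_fun_on F (f t)) \<and>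
     (\<forall>t\<ge>1. \<forall>x\<in>F. has_gradient d (f t) (grad t x) x) \<and>
     (\<exists>G. \<forall>t\<ge>1. \<forall>x\<in>F. \<forall>i. \<bar>grad t x i\<bar> \<le> G)"

text \<open>A run of Adam with the epsilon-modified update (x t is the iterate x_t, t >= 1).
  The weighted projection Pi_{F, sqrt V_t} is an argmin, taken as any minimiser.\<close>
definition adam_eps_run ::
  "nat \<Rightarrow> (nat \<Rightarrow> real) set \<Rightarrow> (nat \<Rightarrow> (nat \<Rightarrow> real) \<Rightarrow> (nat \<Rightarrow> real))
   \<Rightarrow> real \<Rightarrow> real \<Rightarrow> real \<Rightarrow> real
   \<Rightarrow> (nat \<Rightarrow> nat \<Rightarrow> real) \<Rightarrow> (nat \<Rightarrow> nat \<Rightarrow> real) \<Rightarrow> (nat \<Rightarrow> nat \<Rightarrow> real) \<Rightarrow> bool" where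
  "adam_eps_run d F grad \<alpha> \<beta>1 \<beta>2 \<epsilon> x m v \<longleftrightarrow>
     x 1 \<in> F \<and> m 0 = (\<lambda>i. 0) \<and> v 0 = (\<lambda>i. 0) \<and>
     (\<forall>t\<ge>1.
        m t = (\<lambda>i. \<beta>1 * m (t - 1) i + (1 - \<beta>1) * grad t (x t) i) \<and>
        v t = (\<lambda>i. \<beta>2 * v (t - 1) i + (1 - \<beta>2) * (grad t (x t) i)\<^sup>2) \<and>
        (let xhat = (\<lambda>i. x t i - (\<alpha> / sqrt (real t)) * m t i / sqrt (v t i + \<epsilon>)) in
          x (t + 1) \<in> F \<and>
          (\<forall>z\<in>F. (\<Sum>i<d. sqrt (v t i) * (x (t + 1) i - xhat i)\<^sup>2)
                   \<le> (\<Sum>i<d. sqrt (v t i) * (z i - xhat i)\<^sup>2))))"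

definition regret :: "(nat \<Rightarrow> real) set \<Rightarrow> (nat \<Rightarrow> (nat \<Rightarrow> real) \<Rightarrow> real)
    \<Rightarrow> (nat \<Rightarrow> nat \<Rightarrow> real) \<Rightarrow> nat \<Rightarrow> real" where
  "regret F f x T = (\<Sum>t=1..T. f t (x t)) - (INF y\<in>F. \<Sum>t=1..T. f t y)"

end

theory Submission
  imports Defs
begin

definition bb :: "nat \<Rightarrow> real" where "bb t = (if t mod 3 = 1 then 30 else -10)"

fun ww :: "nat \<Rightarrow> real" where
  "ww 0 = 0"
| "ww (Suc t) = (1/1000) * ww t + (1 - 1/1000) * (bb (Suc t))\<^sup>2"

definition clip :: "real \<Rightarrow> real" where "clip h = max (-1) (min 1 h)"

definition st :: "nat \<Rightarrow> real" where "st t = bb t / (sqrt (real t) * sqrt (ww t + 1))"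

fun YY :: "nat \<Rightarrow> real" where
  "YY 0 = 0"
| "YY (Suc t) = (if t = 0 then 0 else clip (YY t - st t))"

lemma bb_sq: "(bb t)\<^sup>2 = (if t mod 3 = 1 then 900 else 100)"
  by (simp add: bb_def power2_eq_square)

lemma ww_bounds: "0 \<le> ww t \<and> ww t \<le> 900"
  by (induction t) (auto simp: bb_sq)

lemma ww_down: assumes "t \<ge> 1" "t mod 3 = 1" shows "ww t \<ge> 899"
proof -
  obtain s where s: "t = Suc s" using assms by (cases t) auto
  show ?thesis using ww_bounds[of s] assms unfolding s by (simp add: bb_sq)
qed

lemma ww_up: assumes "t \<ge> 1" "t mod 3 \<noteq> 1" shows "ww t \<le> 101"
proof -
  obtain s where s: "t = Suc s" using assms by (cases t) auto
  show ?thesis using ww_bounds[of s] assms unfolding s by (simp add: bb_sq)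
qed

lemma st_down: assumes "t \<ge> 1" "t mod 3 = 1" shows "0 < st t \<and> st t \<le> 1 / sqrt (real t)"
proof -
  have w: "ww t \<ge> 899" using ww_down[OF assms] .
  have "sqrt (ww t + 1) \<ge> sqrt 900" using w by (subst real_sqrt_le_iff) simp
  moreover have "sqrt (900::real) = 30" by (simp add: real_sqrt_unique)
  ultimately have q: "sqrt (ww t + 1) \<ge> 30" by simp
  have tp: "sqrt (real t) > 0" using assms by simp
  have "st t = 30 / (sqrt (real t) * sqrt (ww t + 1))" using assms by (simp add: st_def bb_def)
  also have "\<dots> \<le> 30 / (sqrt (real t) * 30)"
    using q tp w by (intro divide_left_mono mult_left_mono) (auto intro!: mult_pos_pos)
  also have "\<dots> = 1 / sqrt (real t)" by simp
  moreover have "0 < sqrt (real t) * sqrt (ww t + 1)" using q tp w by (intro mult_pos_pos) auto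
  ultimately show ?thesis using assms by (simp add: st_def bb_def)
qed

lemma st_up: assumes "t \<ge> 1" "t mod 3 \<noteq> 1" shows "st t < 0 \<and> 0.9 / sqrt (real t) \<le> - st t"
proof -
  have w: "ww t \<le> 101" using ww_up[OF assms] .
  have w0: "ww t \<ge> 0" using ww_bounds by simp
  have "sqrt (ww t + 1) \<le> sqrt 121" using w by (subst real_sqrt_le_iff) simp
  moreover have "sqrt (121::real) = 11" by (simp add: real_sqrt_unique)
  ultimately have q: "sqrt (ww t + 1) \<le> 11" by simp
  have q0: "sqrt (ww t + 1) > 0" using w0 by simp
  have tp: "sqrt (real t) > 0" using assms by simp
  have "0.9 / sqrt (real t) \<le> 10 / (sqrt (real t) * 11)" using tp by (simp add: divide_simps)
  also have "\<dots> \<le> 10 / (sqrt (real t) * sqrt (ww t + 1))"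
    using q q0 tp by (intro divide_left_mono mult_left_mono mult_pos_pos) auto
  also have "\<dots> = - st t" using assms by (simp add: st_def bb_def)
  finally show ?thesis using q0 tp assms by (simp add: st_def bb_def)
qed

lemma sqrt_ineq: assumes "t \<ge> (1::nat)"
  shows "1 / sqrt (real t) \<le> 0.9 / sqrt (real (t+1)) + 0.9 / sqrt (real (t+2))"
proof -
  have tp: "sqrt (real t) > 0" using assms by simp
  have a: "sqrt (real (t+2)) \<le> 1.8 * sqrt (real t)"
  proof -
    have e: "(1.8 * sqrt (real t))\<^sup>2 = 3.24 * real t"
      by (simp only: power_mult_distrib real_sqrt_pow2[OF of_nat_0_le_iff]) (simp add: power2_eq_square)
    have "real (t+2) \<le> (1.8 * sqrt (real t))\<^sup>2" unfolding e using assms by simp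
    hence "sqrt (real (t+2)) \<le> sqrt ((1.8 * sqrt (real t))\<^sup>2)" by (subst real_sqrt_le_iff) 
    thus ?thesis using tp by simp
  qed
  have b: "sqrt (real (t+1)) \<le> sqrt (real (t+2))" by simp
  have p1: "sqrt (real (t+1)) > 0" by simp
  have "1 / sqrt (real t) \<le> 1.8 / sqrt (real (t+2))" using a tp by (simp add: divide_simps)
  also have "\<dots> = 0.9 / sqrt (real (t+2)) + 0.9 / sqrt (real (t+2))" by simp
  also have "\<dots> \<le> 0.9 / sqrt (real (t+1)) + 0.9 / sqrt (real (t+2))"
  proof -
    have "0.9 / sqrt (real (t+2)) \<le> 0.9 / sqrt (real (t+1))"
      by (rule divide_left_mono) (use b p1 in auto)
    thus ?thesis by linarith
  qed
  finally show ?thesis .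
qed

lemma st_key: assumes "t \<ge> 1" "t mod 3 = 1"
  shows "st t \<le> - st (t+1) - st (t+2)"
proof -
  have "(t+1) mod 3 \<noteq> 1" "(t+2) mod 3 \<noteq> 1" using assms by presburger+
  then show ?thesis using st_down[OF assms] st_up[of "t+1"] st_up[of "t+2"] sqrt_ineq[OF assms(1)]
    by simp
qed

lemma dyn:
  fixes y :: "nat \<Rightarrow> real"
  assumes rec: "\<And>t. t \<ge> 1 \<Longrightarrow> y (Suc t) = clip (y t - st t)"
    and bd: "\<And>t. t \<ge> 1 \<Longrightarrow> -1 \<le> y t \<and> y t \<le> 1"
  shows "y (3*k+2) \<le> y (3*k+1) \<and> y (3*k+3) \<le> y (3*k+4) \<and> y (3*k+1) \<le> y (3*k+4) \<and> -1 < y (3*k+4)"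
proof -
  define t where "t = 3*k+1"
  have t1: "t \<ge> 1" "t mod 3 = 1" unfolding t_def by auto
  have m2: "(t+1) mod 3 \<noteq> 1" "(t+2) mod 3 \<noteq> 1" using t1 by presburger+
  note d = st_down[OF t1] and u1 = st_up[of "t+1"] and u2 = st_up[of "t+2"] and key = st_key[OF t1]
  have r1: "y (t+1) = clip (y t - st t)" using rec[of t] t1 by simp
  have r2: "y (t+2) = clip (y (t+1) - st (t+1))" using rec[of "t+1"] t1 by simp
  have r3: "y (t+3) = clip (y (t+2) - st (t+2))" using rec[of "t+2"] by (simp add: eval_nat_numeral)
  have b0: "-1 \<le> y t \<and> y t \<le> 1" using bd t1 by simp
  have b1: "-1 \<le> y (t+1) \<and> y (t+1) \<le> 1" using bd t1 by simp
  have b2: "-1 \<le> y (t+2) \<and> y (t+2) \<le> 1" using bd t1 by simp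
  have "y (t+1) \<le> y t \<and> y (t+3) \<ge> y (t+2) \<and> y t \<le> y (t+3) \<and> -1 < y (t+3)"
  proof -
    have e1: "y (t+1) = max (-1) (y t - st t)" using r1 b0 d unfolding clip_def by simp
    have e2: "y (t+2) = min 1 (y (t+1) - st (t+1))" using r2 b1 u1 m2 unfolding clip_def by simp
    have e3: "y (t+3) = min 1 (y (t+2) - st (t+2))" using r3 b2 u2 m2 unfolding clip_def by simp
    have n1: "st (t+1) < 0" "st (t+2) < 0" using u1 u2 m2 by auto
    show ?thesis
    proof (intro conjI)
      show "y (t+1) \<le> y t" using e1 b0 d by simp
      show "y (t+3) \<ge> y (t+2)" using e3 b2 n1 by simp
      show "-1 < y (t+3)" using e3 b2 n1 by simp
      show "y t \<le> y (t+3)"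
      proof (cases "y (t+2) - st (t+2) \<le> 1")
        case True
        then have "y (t+2) < 1" using n1 by simp
        then have "y (t+2) = y (t+1) - st (t+1)" using e2 by (simp add: min_def split: if_splits)
        moreover have "y (t+1) \<ge> y t - st t" using e1 by simp
        ultimately show ?thesis using e3 True key by simp
      next
        case False
        then show ?thesis using e3 b0 by simp
      qed
    qed
  qed
  moreover have eqs: "3*k+2 = t+1" "3*k+3 = t+2" "3*k+4 = t+3" "3*k+1 = t" by (simp_all add: t_def)
  ultimately show ?thesis unfolding eqs by simp
qed

lemma clip_near: assumes "-1 \<le> z" "z \<le> 1" shows "(clip h - h)\<^sup>2 \<le> (z - h)\<^sup>2"
proof -
  have "\<bar>clip h - h\<bar> \<le> \<bar>z - h\<bar>" using assms unfolding clip_def by (auto simp: max_def min_def)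
  thus ?thesis by (simp add: abs_le_square_iff)
qed

lemma clip_uniq: assumes "-1 \<le> z" "z \<le> 1" "(z - h)\<^sup>2 \<le> (clip h - h)\<^sup>2" shows "z = clip h"
proof -
  have "\<bar>z - h\<bar> \<le> \<bar>clip h - h\<bar>" using assms(3) by (simp add: abs_le_square_iff)
  thus ?thesis using assms(1,2) unfolding clip_def by (auto simp: max_def min_def split: if_splits)
qed

lemma clip_bd: "-1 \<le> clip h \<and> clip h \<le> 1" unfolding clip_def by auto

lemma ww_pos: assumes "t \<ge> 1" shows "ww t \<ge> 99"
proof -
  obtain s where s: "t = Suc s" using assms by (cases t) auto
  show ?thesis using ww_bounds[of s] assms unfolding s by (simp add: bb_sq)
qed

lemma sum3: "(\<Sum>t=1..3*Suc n. g t) = (\<Sum>t=1..3*n. g t) + g (3*n+1) + g (3*n+2) + (g (3*n+3) :: real)"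
proof -
  have "3 * Suc n = Suc (Suc (Suc (3*n)))" by simp
  then have "(\<Sum>t=1..3*Suc n. g t) = (\<Sum>t=1..Suc (Suc (Suc (3*n))). g t)" by (simp only:)
  also have "\<dots> = (\<Sum>t=1..3*n. g t) + g (Suc (3*n)) + g (Suc (Suc (3*n))) + g (Suc (Suc (Suc (3*n))))"
    by (simp only: sum.cl_ivl_Suc) simp
  finally show ?thesis by (simp add: eval_nat_numeral)
qed

lemma sum_bound:
  fixes z :: "nat \<Rightarrow> real"
  assumes m1: "\<And>k. z (3*k+2) \<le> z (3*k+1)" and m2: "\<And>k. z (3*k+3) \<le> z (3*k+4)"
  shows "(\<Sum>t=1..3*n. bb t * z t) \<ge> 10 * (\<Sum>k<n. z (3*k+1)) + 10 * z 1 - 10 * z (3*n+1)"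
proof (induction n)
  case 0
  then show ?case by simp
next
  case (Suc n)
  have "(3*n+1) mod 3 = 1" "(3*n+2) mod 3 = 2" "(3*n+3) mod 3 = 0" by presburger+
  then have b1: "bb (3*n+1) = 30" "bb (3*n+2) = -10" "bb (3*n+3) = -10" unfolding bb_def by simp_all
  have e: "3 * Suc n + 1 = 3*n+4" by simp
  show ?case unfolding sum3 e using Suc.IH b1 m1[of n] m2[of n] by simp
qed

lemma sum_lb:
  fixes z :: "nat \<Rightarrow> real"
  assumes "\<And>k. k \<ge> 1 \<Longrightarrow> z (3*k+1) \<ge> c" "z 1 \<ge> 0" "c > 0"
  shows "(\<Sum>k<n. z (3*k+1)) \<ge> real n * c - c"
proof (induction n)
  case 0 then show ?case using assms by simp
next
  case (Suc n)
  show ?case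
  proof (cases "n = 0")
    case True then show ?thesis using assms by simp
  next
    case False then show ?thesis using Suc.IH assms(1)[of n] by (simp add: algebra_simps)
  qed
qed

lemma mono_c:
  fixes z :: "nat \<Rightarrow> real"
  assumes "\<And>k. z (3*k+1) \<le> z (3*k+4)" "k \<ge> 1"
  shows "z 4 \<le> z (3*k+1)"
  using assms(2)
proof (induction k rule: dec_induct)
  case base then show ?case by simp
next
  case (step m)
  have eq: "3 * Suc m + 1 = 3*m+4" by simp
  have "z 4 \<le> z (3*m+4)" using step.IH assms(1)[of m] by linarith
  then show ?case unfolding eq .
qed

definition FF :: "(nat \<Rightarrow> real) set" where
  "FF = {x. x \<in> Rd 1 \<and> -1 \<le> x 0 \<and> x 0 \<le> 1}"

definition ff :: "real \<Rightarrow> nat \<Rightarrow> (nat \<Rightarrow> real) \<Rightarrow> real" where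
  "ff eps t y = bb t * sqrt eps * y 0"

definition gg :: "real \<Rightarrow> nat \<Rightarrow> (nat \<Rightarrow> real) \<Rightarrow> nat \<Rightarrow> real" where
  "gg eps t x i = (if i = 0 then bb t * sqrt eps else 0)"

lemma bb_abs: "\<bar>bb t\<bar> \<le> 30" by (simp add: bb_def)

lemma linf_nonneg: "linf_dist d x y \<ge> 0"
  unfolding linf_dist_def by (rule Max_ge) auto

lemma oco: assumes "eps > 0" shows "oco_problem 1 FF (ff eps) (gg eps)"
  unfolding oco_problem_def
proof (intro conjI)
  show "convex_set_Rd 1 FF"
    unfolding convex_set_Rd_def
  proof (intro conjI ballI allI impI)
    show "FF \<subseteq> Rd 1" unfolding FF_def by auto
    fix x y u assume x: "x \<in> FF" and y: "y \<in> FF" and u: "0 \<le> u \<and> u \<le> (1::real)"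
    have a: "u * x 0 \<le> u" "(1-u) * y 0 \<le> 1 - u" "u * x 0 \<ge> -u" "(1-u) * y 0 \<ge> -(1-u)"
      using x y u unfolding FF_def by (auto intro: mult_left_le mult_left_mono[of "-1" _ u, simplified]
          mult_left_mono[of "-1" _ "1-u", simplified])
    show "(\<lambda>i. u * x i + (1 - u) * y i) \<in> FF"
      using x y a unfolding FF_def Rd_def by auto
  qed
  show "\<exists>D. \<forall>x\<in>FF. \<forall>y\<in>FF. \<forall>i. \<bar>x i - y i\<bar> \<le> D"
  proof (rule exI[of _ 2], intro ballI allI)
    fix x y i assume "x \<in> FF" "y \<in> FF"
    then show "\<bar>x i - y i\<bar> \<le> 2" unfolding FF_def Rd_def by (cases "i = 0") auto
  qed
  show "\<forall>t\<ge>1. convex_fun_on FF (ff eps t)"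
    unfolding convex_fun_on_def ff_def by (simp add: algebra_simps)
  show "\<forall>t\<ge>1. \<forall>x\<in>FF. has_gradient 1 (ff eps t) (gg eps t x) x"
    unfolding has_gradient_def
  proof (intro allI impI ballI conjI)
    fix t x
    show "gg eps t x \<in> Rd 1" unfolding Rd_def gg_def by auto
    fix e :: real assume "e > 0"
    then show "\<exists>\<delta>>0. \<forall>y\<in>Rd 1. linf_dist 1 y x < \<delta> \<longrightarrow>
        \<bar>ff eps t y - ff eps t x - (\<Sum>i<1. gg eps t x i * (y i - x i))\<bar> \<le> e * linf_dist 1 y x"
      by (intro exI[of _ 1]) (simp add: ff_def gg_def algebra_simps linf_nonneg)
  qed
  show "\<exists>G. \<forall>t\<ge>1. \<forall>x\<in>FF. \<forall>i. \<bar>gg eps t x i\<bar> \<le> G"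
  proof (intro exI[of _ "30 * sqrt eps"] allI impI ballI)
    fix t x i
    show "\<bar>gg eps t x i\<bar> \<le> 30 * sqrt eps"
      using bb_abs[of t] assms by (auto simp: gg_def abs_mult intro: mult_right_mono)
  qed
qed

lemma step_eq: assumes "eps > 0"
  shows "1 / sqrt (real t) * (bb t * sqrt eps) / sqrt (eps * ww t + eps) = st t"
proof -
  have w: "ww t + 1 > 0" using ww_bounds[of t] by simp
  have "sqrt (eps * ww t + eps) = sqrt eps * sqrt (ww t + 1)"
    by (simp add: real_sqrt_mult[symmetric] algebra_simps)
  then show ?thesis using assms w unfolding st_def by (simp add: field_simps)
qed

definition XX :: "nat \<Rightarrow> nat \<Rightarrow> real" where "XX t = (\<lambda>i. if i = 0 then YY t else 0)"
definition MM :: "real \<Rightarrow> nat \<Rightarrow> nat \<Rightarrow> real" where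
  "MM eps t = (if t = 0 then (\<lambda>i. 0) else gg eps t (XX t))"
definition VV :: "real \<Rightarrow> nat \<Rightarrow> nat \<Rightarrow> real" where
  "VV eps t = (\<lambda>i. if i = 0 then eps * ww t else 0)"

lemma VV_step: assumes "eps > 0" "t \<ge> 1"
  shows "VV eps t = (\<lambda>i. 1/1000 * VV eps (t - 1) i + (1 - 1/1000) * (gg eps t y i)\<^sup>2)"
proof -
  obtain s where s: "t = Suc s" using assms by (cases t) auto
  show ?thesis using assms unfolding s
    by (auto simp: VV_def gg_def power_mult_distrib algebra_simps)
qed

lemma run_exists: assumes "eps > 0" shows "adam_eps_run 1 FF (gg eps) 1 0 (1/1000) eps XX (MM eps) (VV eps)"
  unfolding adam_eps_run_def Let_def
proof (intro conjI allI impI)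
  show "XX 1 \<in> FF" by (simp add: XX_def FF_def Rd_def)
  show "MM eps 0 = (\<lambda>i. 0)" by (simp add: MM_def)
  show "VV eps 0 = (\<lambda>i. 0)" by (simp add: VV_def fun_eq_iff)
  fix t :: nat assume t: "t \<ge> 1"
  show "MM eps t = (\<lambda>i. 0 * MM eps (t - 1) i + (1 - 0) * gg eps t (XX t) i)"
    using t by (simp add: MM_def)
  show "VV eps t = (\<lambda>i. 1/1000 * VV eps (t - 1) i + (1 - 1/1000) * (gg eps t (XX t) i)\<^sup>2)"
    using VV_step[OF assms t] .
  have Y: "YY (t+1) = clip (YY t - st t)" using t by simp
  show "XX (t+1) \<in> FF" unfolding XX_def FF_def Rd_def using Y clip_bd by auto
  have h: "XX t 0 - 1 / sqrt (real t) * MM eps t 0 / sqrt (VV eps t 0 + eps) = YY t - st t"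
    using t step_eq[OF assms, of t] by (simp add: XX_def MM_def VV_def gg_def)
  show "\<forall>z\<in>FF. (\<Sum>i<1. sqrt (VV eps t i) * (XX (t + 1) i - (XX t i - 1 / sqrt (real t) * MM eps t i / sqrt (VV eps t i + eps)))\<^sup>2)
                   \<le> (\<Sum>i<1. sqrt (VV eps t i) * (z i - (XX t i - 1 / sqrt (real t) * MM eps t i / sqrt (VV eps t i + eps)))\<^sup>2)"
  proof
    fix z assume z: "z \<in> FF"
    have "(XX (t+1) 0 - (YY t - st t))\<^sup>2 \<le> (z 0 - (YY t - st t))\<^sup>2"
      using clip_near[of "z 0" "YY t - st t"] z Y unfolding FF_def XX_def by simp
    then have "sqrt (VV eps t 0) * (XX (t+1) 0 - (YY t - st t))\<^sup>2 \<le> sqrt (VV eps t 0) * (z 0 - (YY t - st t))\<^sup>2"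
      by (rule mult_left_mono) (use assms ww_bounds[of t] in \<open>simp add: VV_def\<close>)
    then show "(\<Sum>i<1. sqrt (VV eps t i) * (XX (t + 1) i - (XX t i - 1 / sqrt (real t) * MM eps t i / sqrt (VV eps t i + eps)))\<^sup>2)
                   \<le> (\<Sum>i<1. sqrt (VV eps t i) * (z i - (XX t i - 1 / sqrt (real t) * MM eps t i / sqrt (VV eps t i + eps)))\<^sup>2)"
      using h by simp
  qed
qed

lemma run_v: assumes "eps > 0" "adam_eps_run 1 FF (gg eps) 1 0 (1/1000) eps x m v"
  shows "v t = VV eps t"
proof (induction t)
  case 0 then show ?case using assms(2) by (simp add: adam_eps_run_def VV_def fun_eq_iff)
next
  case (Suc t)
  have "v (Suc t) = (\<lambda>i. 1/1000 * v t i + (1 - 1/1000) * (gg eps (Suc t) (x (Suc t)) i)\<^sup>2)"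
    using assms(2) unfolding adam_eps_run_def by (metis diff_Suc_1 le_add1 plus_1_eq_Suc)
  also have "\<dots> = VV eps (Suc t)" using VV_step[OF assms(1), of "Suc t" "x (Suc t)"] Suc.IH by simp
  finally show ?case .
qed

lemma run_char: assumes "eps > 0" "adam_eps_run 1 FF (gg eps) 1 0 (1/1000) eps x m v" "t \<ge> 1"
  shows "x t \<in> FF \<and> x (Suc t) \<in> FF \<and> x (Suc t) 0 = clip (x t 0 - st t)"
proof -
  have R: "x 1 \<in> FF" "\<And>t. t \<ge> 1 \<Longrightarrow> x (t+1) \<in> FF" using assms(2) unfolding adam_eps_run_def Let_def by auto
  have xt: "x t \<in> FF"
  proof (cases t)
    case 0 then show ?thesis using assms by simp
  next
    case (Suc s) then show ?thesis using R by (cases s) auto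
  qed
  have xs: "x (Suc t) \<in> FF" using R(2)[OF assms(3)] by simp
  have mt: "m t = (\<lambda>i. 0 * m (t - 1) i + (1 - 0) * gg eps t (x t) i)"
    using assms(2,3) unfolding adam_eps_run_def by auto
  have m0: "m t 0 = bb t * sqrt eps" using mt by (simp add: gg_def)
  have vt: "v t = VV eps t" by (rule run_v[OF assms(1,2)])
  define h where "h = x t 0 - st t"
  have hh: "x t 0 - 1 / sqrt (real t) * m t 0 / sqrt (v t 0 + eps) = h"
    using step_eq[OF assms(1), of t] unfolding h_def m0 vt by (simp add: VV_def)
  have A: "\<forall>z\<in>FF. (\<Sum>i<1. sqrt (v t i) * (x (t + 1) i - (x t i - 1 / sqrt (real t) * m t i / sqrt (v t i + eps)))\<^sup>2)
                   \<le> (\<Sum>i<1. sqrt (v t i) * (z i - (x t i - 1 / sqrt (real t) * m t i / sqrt (v t i + eps)))\<^sup>2)"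
    using assms(2,3) unfolding adam_eps_run_def Let_def by auto
  define zc where "zc = (\<lambda>i::nat. if i = 0 then clip h else 0)"
  have zc: "zc \<in> FF" unfolding zc_def FF_def Rd_def using clip_bd by auto
  have "sqrt (v t 0) * (x (Suc t) 0 - h)\<^sup>2 \<le> sqrt (v t 0) * (clip h - h)\<^sup>2"
  proof -
    have A': "\<And>z. z \<in> FF \<Longrightarrow> sqrt (v t 0) * (x (Suc t) 0 - h)\<^sup>2 \<le> sqrt (v t 0) * (z 0 - h)\<^sup>2"
      using A hh by simp
    show ?thesis using A'[OF zc] by (simp add: zc_def)
  qed
  moreover have "sqrt (v t 0) > 0" using vt ww_pos[OF assms(3)] assms(1) by (simp add: VV_def)
  ultimately have "(x (Suc t) 0 - h)\<^sup>2 \<le> (clip h - h)\<^sup>2" by simp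
  then have "x (Suc t) 0 = clip h" using xs clip_uniq unfolding FF_def by auto
  then show ?thesis using xt xs h_def by simp
qed

lemma regret_lb: assumes "eps > 0" "adam_eps_run 1 FF (gg eps) 1 0 (1/1000) eps x m v"
  shows "regret FF (ff eps) x T \<ge> sqrt eps * (\<Sum>t=1..T. bb t * (x t 0 + 1))"
proof -
  define xm where "xm = (\<lambda>i::nat. if i = 0 then -1 else (0::real))"
  have xm: "xm \<in> FF" unfolding xm_def FF_def Rd_def by auto
  have bdd: "bdd_below ((\<lambda>y. \<Sum>t=1..T. ff eps t y) ` FF)"
  proof (rule bdd_belowI2[of _ "\<Sum>t=1..T. - (30 * sqrt eps)"])
    fix y assume y: "y \<in> FF"
    show "(\<Sum>t=1..T. - (30 * sqrt eps)) \<le> (\<Sum>t=1..T. ff eps t y)"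
    proof (rule sum_mono)
      fix t
      have "\<bar>ff eps t y\<bar> = \<bar>bb t\<bar> * sqrt eps * \<bar>y 0\<bar>" unfolding ff_def using assms by (simp add: abs_mult)
      also have "\<dots> \<le> 30 * sqrt eps * 1"
        using y bb_abs[of t] assms unfolding FF_def by (intro mult_mono) auto
      finally show "- (30 * sqrt eps) \<le> ff eps t y" by linarith
    qed
  qed
  have "(INF y\<in>FF. \<Sum>t=1..T. ff eps t y) \<le> (\<Sum>t=1..T. ff eps t xm)"
    by (rule cINF_lower[OF bdd xm])
  also have "\<dots> = - (\<Sum>t=1..T. bb t * sqrt eps)" by (simp add: ff_def xm_def sum_negf)
  finally have I: "(INF y\<in>FF. \<Sum>t=1..T. ff eps t y) \<le> - (\<Sum>t=1..T. bb t * sqrt eps)" .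
  have "sqrt eps * (\<Sum>t=1..T. bb t * (x t 0 + 1)) = (\<Sum>t=1..T. ff eps t (x t)) + (\<Sum>t=1..T. bb t * sqrt eps)"
    by (simp add: ff_def sum_distrib_left sum.distrib[symmetric] algebra_simps)
  then show ?thesis using I unfolding regret_def by linarith
qed

theorem theorem6:
  fixes \<epsilon> :: real
  assumes "\<epsilon> > 0"
  shows "\<exists>(d::nat) F f grad \<alpha> \<beta>1 \<beta>2.
           oco_problem d F f grad \<and>
           0 \<le> \<beta>1 \<and> \<beta>1 < 1 \<and> 0 \<le> \<beta>2 \<and> \<beta>2 < 1 \<and> 0 < \<beta>2 \<and> \<beta>1\<^sup>2 / sqrt \<beta>2 < 1 \<and> \<alpha> > 0 \<and>
           (\<exists>x m v. adam_eps_run d F grad \<alpha> \<beta>1 \<beta>2 \<epsilon> x m v) \<and>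
           (\<forall>x m v. adam_eps_run d F grad \<alpha> \<beta>1 \<beta>2 \<epsilon> x m v \<longrightarrow>
              \<not> ((\<lambda>T. regret F f x T / real T) \<longlonglongrightarrow> 0))"
proof (rule exI[of _ 1], rule exI[of _ FF], rule exI[of _ "ff \<epsilon>"], rule exI[of _ "gg \<epsilon>"],
    rule exI[of _ 1], rule exI[of _ 0], rule exI[of _ "1/1000"], intro conjI)
  show "oco_problem 1 FF (ff \<epsilon>) (gg \<epsilon>)" by (rule oco[OF assms])
  show "\<exists>x m v. adam_eps_run 1 FF (gg \<epsilon>) 1 0 (1/1000) \<epsilon> x m v" using run_exists[OF assms] by blast
  show "\<forall>x m v. adam_eps_run 1 FF (gg \<epsilon>) 1 0 (1/1000) \<epsilon> x m v \<longrightarrow>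
              \<not> ((\<lambda>T. regret FF (ff \<epsilon>) x T / real T) \<longlonglongrightarrow> 0)"
  proof (intro allI impI notI)
    fix x m v
    assume run: "adam_eps_run 1 FF (gg \<epsilon>) 1 0 (1/1000) \<epsilon> x m v"
    assume lim: "(\<lambda>T. regret FF (ff \<epsilon>) x T / real T) \<longlonglongrightarrow> 0"
    define y where "y t = x t 0" for t
    have rec: "\<And>t. t \<ge> 1 \<Longrightarrow> y (Suc t) = clip (y t - st t)"
      using run_char[OF assms run] unfolding y_def by blast
    have bd: "\<And>t. t \<ge> 1 \<Longrightarrow> -1 \<le> y t \<and> y t \<le> 1"
      using run_char[OF assms run] unfolding y_def FF_def by blast
    note D = dyn[OF rec bd]
    define z where "z t = y t + 1" for t
    define c where "c = z 4"
    have c: "c > 0" using D[of 0] unfolding c_def z_def by simp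
    have zc: "\<And>k. k \<ge> 1 \<Longrightarrow> z (3*k+1) \<ge> c"
      unfolding c_def by (rule mono_c) (use D in \<open>auto simp: z_def\<close>)
    have S: "(\<Sum>t=1..3*n. bb t * z t) \<ge> 10 * (\<Sum>k<n. z (3*k+1)) + 10 * z 1 - 10 * z (3*n+1)" for n
      by (rule sum_bound) (use D in \<open>auto simp: z_def\<close>)
    have L: "(\<Sum>k<n. z (3*k+1)) \<ge> real n * c - c" for n
      by (rule sum_lb[of c z, OF zc]) (use bd[of 1] c in \<open>auto simp: z_def\<close>)
    have R: "regret FF (ff \<epsilon>) x (3*n) \<ge> sqrt \<epsilon> * (10 * (real n * c - c) - 20)" for n
    proof -
      have z1: "z 1 \<ge> 0" "z (3*n+1) \<le> 2" using bd[of 1] bd[of "3*n+1"] unfolding z_def by auto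
      have "10 * (real n * c - c) - 20 \<le> (\<Sum>t=1..3*n. bb t * z t)" using S[of n] L[of n] z1 by (simp add: algebra_simps)
      then have "sqrt \<epsilon> * (10 * (real n * c - c) - 20) \<le> sqrt \<epsilon> * (\<Sum>t=1..3*n. bb t * z t)"
        by (rule mult_left_mono) (use assms in simp)
      also have "\<dots> \<le> regret FF (ff \<epsilon>) x (3*n)"
        using regret_lb[OF assms run, of "3*n"] unfolding z_def y_def by simp
      finally show ?thesis .
    qed
    define A where "A = 10 * c * sqrt \<epsilon> / 3"
    define B where "B = sqrt \<epsilon> * (10 * c + 20) / 3"
    have A: "A > 0" using c assms unfolding A_def by simp
    have l1: "(\<lambda>n. A - B / real n) \<longlonglongrightarrow> A - 0"
      by (intro tendsto_diff tendsto_const lim_const_over_n)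
    have l2: "(\<lambda>n. regret FF (ff \<epsilon>) x (3*n) / real (3*n)) \<longlonglongrightarrow> 0"
      using LIMSEQ_subseq_LIMSEQ[OF lim, of "\<lambda>n. 3*n"] by (simp add: strict_mono_def comp_def)
    have "\<forall>n\<ge>1. A - B / real n \<le> regret FF (ff \<epsilon>) x (3*n) / real (3*n)"
    proof (intro allI impI)
      fix n :: nat assume n: "n \<ge> 1"
      have "(A - B / real n) * real (3*n) = sqrt \<epsilon> * (10 * (real n * c - c) - 20)"
        using n unfolding A_def B_def by (simp add: field_simps)
      also have "\<dots> \<le> regret FF (ff \<epsilon>) x (3*n)" by (rule R)
      finally show "A - B / real n \<le> regret FF (ff \<epsilon>) x (3*n) / real (3*n)"
        using n by (simp add: pos_le_divide_eq)
    qed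
    then have "A - 0 \<le> 0" using LIMSEQ_le[OF l1 l2] by blast
    then show False using A by simp
  qed
qed simp_all

end
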